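(* Let $S$ be a numerical semigroup and $x\in\mathrm{msg}(S)$ with $x<\mathrm{F}(S)$. Then $S\setminus\{x\}$ is a numerical semigroup and $\mathrm{l}(S\setminus\{x\})=\mathrm{l}(S)+2$.
   Context: A numerical semigroup is a subset $S\subseteq\mathbb{N}$ closed under addition with $0\in S$ and $\mathbb{N}\setminus S$ finite; $\mathrm{F}(S)=\max(\mathbb{Z}\setminus S)$. $\mathrm{msg}(S)$ denotes the (unique, finite) minimal system of generators of $S$, i.e. the elements of $S\setminus\{0\}$ that are not sums of two elements of $S\setminus\{0\}$. $\mathrm{N}(S)=\{s\in S\mid s<\mathrm{F}(S)\}$, $\mathrm{L}(S)=\{x\in\mathbb{N}\setminus S\mid \mathrm{F}(S)-x\notin \mathrm{N}(S)\}$, $\mathrm{l}(S)=\#\mathrm{L}(S)$. *)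

theory Defs
  imports Main
begin

definition numerical_semigroup :: "nat set \<Rightarrow> bool" where
  "numerical_semigroup S \<longleftrightarrow> 0 \<in> S \<and> (\<forall>a\<in>S. \<forall>b\<in>S. a + b \<in> S) \<and> finite (UNIV - S)"

definition frobenius :: "nat set \<Rightarrow> int" where
  "frobenius S = Max ({-1} \<union> int ` (UNIV - S))"

definition msg :: "nat set \<Rightarrow> nat set" where
  "msg S = {x \<in> S - {0}. \<not> (\<exists>a\<in>S - {0}. \<exists>b\<in>S - {0}. x = a + b)}"

definition Nset :: "nat set \<Rightarrow> nat set" where
  "Nset S = {s \<in> S. int s < frobenius S}"

definition Lset :: "nat set \<Rightarrow> nat set" where
  "Lset S = {x \<in> UNIV - S. \<not> (\<exists>n \<in> Nset S. int n = frobenius S - int x)}"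

definition lnum :: "nat set \<Rightarrow> nat" where
  "lnum S = card (Lset S)"

end

theory Submission
  imports Defs
begin

lemma frob_facts:
  assumes ns: "numerical_semigroup S" and pos: "frobenius S \<ge> 0"
  shows "\<exists>f. frobenius S = int f \<and> f \<notin> S \<and> (\<forall>g. g \<notin> S \<longrightarrow> g \<le> f)"
proof -
  have fin: "finite (UNIV - S)" using ns by (simp add: numerical_semigroup_def)
  let ?A = "{-1} \<union> int ` (UNIV - S)"
  have finA: "finite ?A" using fin by simp
  have "frobenius S \<in> ?A" unfolding frobenius_def using finA by (intro Max_in) auto
  then obtain f where f: "f \<notin> S" "frobenius S = int f" using pos by auto
  have "\<forall>g. g \<notin> S \<longrightarrow> g \<le> f"
  proof (intro allI impI)
    fix g assume "g \<notin> S"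
    then have "int g \<in> ?A" by auto
    then have "int g \<le> frobenius S" unfolding frobenius_def using finA by (intro Max_ge) auto
    then show "g \<le> f" using f by simp
  qed
  then show ?thesis using f by blast
qed

lemma Lset_char:
  assumes ns: "numerical_semigroup S" and f: "frobenius S = int f" "f \<notin> S"
    and le: "\<forall>g. g \<notin> S \<longrightarrow> g \<le> f"
  shows "Lset S = {g. g \<notin> S \<and> f - g \<notin> S}"
proof -
  have z: "0 \<in> S" using ns by (simp add: numerical_semigroup_def)
  show ?thesis
  proof (intro set_eqI iffI)
    fix g assume "g \<in> Lset S"
    then have g: "g \<notin> S" and nn: "\<not> (\<exists>n \<in> Nset S. int n = int f - int g)"
      unfolding Lset_def using f by auto
    have "g \<le> f" "g > 0" using le g z by (auto intro: Nat.gr0I)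
    show "g \<in> {g. g \<notin> S \<and> f - g \<notin> S}"
    proof (rule ccontr)
      assume "g \<notin> {g. g \<notin> S \<and> f - g \<notin> S}"
      then have "f - g \<in> S" using g by auto
      then have "f - g \<in> Nset S" unfolding Nset_def using f \<open>g>0\<close> \<open>g \<le> f\<close> by auto
      then show False using nn \<open>g \<le> f\<close> by (metis of_nat_diff)
    qed
  next
    fix g assume "g \<in> {g. g \<notin> S \<and> f - g \<notin> S}"
    then have g: "g \<notin> S" "f - g \<notin> S" by auto
    have "g \<le> f" using le g by auto
    show "g \<in> Lset S" unfolding Lset_def
    proof (auto simp: g(1))
      fix n assume "n \<in> Nset S" "int n = frobenius S - int g"
      then have "n = f - g" "n \<in> S" using f \<open>g \<le> f\<close> by (auto simp: Nset_def)
      then show False using g by simp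
    qed
  qed
qed

theorem lemma8:
  fixes S :: "nat set" and x :: nat
  assumes "numerical_semigroup S"
    and "x \<in> msg S"
    and "int x < frobenius S"
  shows "numerical_semigroup (S - {x}) \<and> lnum (S - {x}) = lnum S + 2"
proof -
  have z: "0 \<in> S" and cl: "\<forall>a\<in>S. \<forall>b\<in>S. a + b \<in> S" and fin: "finite (UNIV - S)"
    using assms(1) by (auto simp: numerical_semigroup_def)
  have xS: "x \<in> S" "x \<noteq> 0" and xm: "\<not> (\<exists>a\<in>S - {0}. \<exists>b\<in>S - {0}. x = a + b)"
    using assms(2) by (auto simp: msg_def)
  have ns': "numerical_semigroup (S - {x})"
    unfolding numerical_semigroup_def
  proof (intro conjI ballI)
    show "0 \<in> S - {x}" using z xS by auto
  next
    fix a b assume a: "a \<in> S - {x}" and b: "b \<in> S - {x}"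
    have "a + b \<in> S" using cl a b by auto
    moreover have "a + b \<noteq> x"
    proof
      assume e: "a + b = x"
      show False
      proof (cases "a = 0 \<or> b = 0")
        case True then show False using a b e by auto
      next
        case False then show False using xm a b e by auto
      qed
    qed
    ultimately show "a + b \<in> S - {x}" by auto
  next
    have "UNIV - (S - {x}) = insert x (UNIV - S)" using xS by auto
    then show "finite (UNIV - (S - {x}))" using fin by simp
  qed
  obtain f where f: "frobenius S = int f" "f \<notin> S" and le: "\<forall>g. g \<notin> S \<longrightarrow> g \<le> f"
    using frob_facts[OF assms(1)] assms(3) by fastforce
  have xf: "x < f" using assms(3) f by simp
  have eqA: "{-1} \<union> int ` (UNIV - (S - {x})) = insert (int x) ({-1} \<union> int ` (UNIV - S))"
    using xS by auto
  have finA: "finite ({-1} \<union> int ` (UNIV - S))" using fin by simp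
  have "frobenius (S - {x}) = max (int x) (frobenius S)"
    unfolding frobenius_def eqA using finA by (simp add: Max_insert)
  then have f': "frobenius (S - {x}) = int f" using f xf by simp
  have le': "\<forall>g. g \<notin> S - {x} \<longrightarrow> g \<le> f" using le xf by auto
  have L': "Lset (S - {x}) = {g. g \<notin> S - {x} \<and> f - g \<notin> S - {x}}"
    using Lset_char[OF ns' f' _ le'] f by auto
  have L: "Lset S = {g. g \<notin> S \<and> f - g \<notin> S}" using Lset_char[OF assms(1) f(1,2) le] .
  have fx: "f - x \<notin> S"
  proof
    assume "f - x \<in> S"
    then have "(f - x) + x \<in> S" using cl xS by auto
    then show False using xf f by simp
  qed
  have neq: "x \<noteq> f - x"
  proof
    assume "x = f - x"
    then have "x + x = f" using xf by simp
    then show False using cl xS f by metis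
  qed
  have "Lset (S - {x}) = insert x (insert (f - x) (Lset S))"
  proof (intro set_eqI iffI)
    fix g assume "g \<in> Lset (S - {x})"
    then have g: "g \<notin> S - {x}" "f - g \<notin> S - {x}" using L' by auto
    have "g \<le> f" using g le xf by auto
    show "g \<in> insert x (insert (f - x) (Lset S))"
    proof (cases "g = x")
      case True then show ?thesis by simp
    next
      case False
      then have gS: "g \<notin> S" using g(1) by blast
      show ?thesis
      proof (cases "f - g = x")
        case True then have "g = f - x" using \<open>g \<le> f\<close> by simp
        then show ?thesis by simp
      next
        case False
        then have "f - g \<notin> S" using g(2) by blast
        then have "g \<in> Lset S" using gS L by blast
        then show ?thesis by blast
      qed
    qed
  next
    fix g assume "g \<in> insert x (insert (f - x) (Lset S))"
    moreover have "f - (f - x) = x" using xf by simp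
    ultimately show "g \<in> Lset (S - {x})" using L L' fx by auto
  qed
  moreover have "finite (Lset S)" unfolding L by (rule finite_subset[OF _ fin]) blast
  moreover have "x \<notin> Lset S" "f - x \<notin> Lset S" using L xS xf by auto
  ultimately have "lnum (S - {x}) = lnum S + 2"
    unfolding lnum_def using neq by simp
  then show ?thesis using ns' by simp
qed

end
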